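(* Let $G$ be a graph and let $0<d<1<u$ be parameters. Assume that the minimum degree satisfies $\delta(G[S])\le d(|S|-1)$ for every vertex subset $S\subseteq V(G)$ with $|S|\ge u$. Then for every vertex subset $W\subseteq V(G)$ with $|W|\ge u$, $$\alpha(G[W])\ge-\log_{(1-d)(1-1/u)}\big(|W|/u\big).$$
   Context: For a graph $H$, $\delta(H)$ denotes its minimum degree and $\alpha(H)$ the size of a largest independent set; $G[S]$ denotes the subgraph of $G$ induced by $S$. *)

theory Defs
  imports Complex_Main
begin

text \<open>A finite simple graph: finite vertex set V and a symmetric, irreflexive
adjacency relation E (only its restriction to V matters).\<close>

definition simple_graph :: "'a set \<Rightarrow> ('a \<Rightarrow> 'a \<Rightarrow> bool) \<Rightarrow> bool" where
  "simple_graph V E \<longleftrightarrow> finite V \<and> (\<forall>x y. E x y \<longrightarrow> E y x) \<and> (\<forall>x. \<not> E x x)"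

definition deg_in :: "('a \<Rightarrow> 'a \<Rightarrow> bool) \<Rightarrow> 'a set \<Rightarrow> 'a \<Rightarrow> nat" where
  "deg_in E S v = card {w \<in> S. E v w}"

text \<open>Minimum degree of the induced subgraph G[S] (S finite, nonempty).\<close>
definition min_degree :: "('a \<Rightarrow> 'a \<Rightarrow> bool) \<Rightarrow> 'a set \<Rightarrow> nat" where
  "min_degree E S = Min (deg_in E S ` S)"

definition independent :: "('a \<Rightarrow> 'a \<Rightarrow> bool) \<Rightarrow> 'a set \<Rightarrow> bool" where
  "independent E I \<longleftrightarrow> (\<forall>x\<in>I. \<forall>y\<in>I. \<not> E x y)"

text \<open>Independence number of the induced subgraph G[W] (W finite).\<close>
definition indep_number :: "('a \<Rightarrow> 'a \<Rightarrow> bool) \<Rightarrow> 'a set \<Rightarrow> nat" where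
  "indep_number E W = Max {card I | I. I \<subseteq> W \<and> independent E I}"

end

theory Submission
  imports Defs
begin

lemma greedy:
  fixes V :: "'a set" and E :: "'a \<Rightarrow> 'a \<Rightarrow> bool" and d u q :: real
  assumes sg: "simple_graph V E"
    and d0: "0 < d" and d1: "d < 1" and u1: "1 < u"
    and md: "\<And>S. S \<subseteq> V \<Longrightarrow> real (card S) \<ge> u \<Longrightarrow>
           real (min_degree E S) \<le> d * (real (card S) - 1)"
    and qdef: "q = (1 - d) * (1 - 1 / u)"
  shows "W \<subseteq> V \<Longrightarrow> \<exists>I. I \<subseteq> W \<and> independent E I \<and> real (card W) * q ^ card I < u"
proof (induction "card W" arbitrary: W rule: less_induct)
  case less
  have finV: "finite V" using sg by (simp add: simple_graph_def)
  have finW: "finite W" using less.prems finV finite_subset by blast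
  show ?case
  proof (cases "real (card W) < u")
    case True
    then show ?thesis by (intro exI[of _ "{}"]) (auto simp: independent_def)
  next
    case False
    hence Wu: "real (card W) \<ge> u" by simp
    hence "W \<noteq> {}" using u1 by auto
    hence "min_degree E W \<in> deg_in E W ` W" unfolding min_degree_def
      using finW by (intro Min_in) auto
    then obtain v where vW: "v \<in> W" and vd: "deg_in E W v = min_degree E W" by auto
    have degle: "real (deg_in E W v) \<le> d * (real (card W) - 1)"
      using md[OF less.prems Wu] vd by simp
    define N where "N = {w \<in> W. E v w}"
    define W' where "W' = W - insert v N"
    have vN: "v \<notin> N" using sg by (simp add: N_def simple_graph_def)
    have NW: "insert v N \<subseteq> W" using vW by (auto simp: N_def)
    have cW': "card W' = card W - (1 + card N)"
      unfolding W'_def using card_Diff_subset[OF _ NW] finW vN finite_subset[OF NW finW]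
      by simp
    have cN: "card (insert v N) \<le> card W" using card_mono[OF finW NW] .
    hence cW'r: "real (card W') = real (card W) - 1 - real (card N)"
      using cW' vN finite_subset[OF NW finW] by auto
    have lt: "card W' < card W" using cW' cN vN finite_subset[OF NW finW] by auto
    have W'V: "W' \<subseteq> V" using less.prems by (auto simp: W'_def)
    obtain I' where I': "I' \<subseteq> W'" "independent E I'" "real (card W') * q ^ card I' < u"
      using less.hyps[OF lt W'V] by blast
    define I where "I = insert v I'"
    have vI': "v \<notin> I'" using I'(1) by (auto simp: W'_def)
    have finI': "finite I'" using I'(1) finW finite_subset unfolding W'_def by blast
    have cI: "card I = Suc (card I')" using vI' finI' by (simp add: I_def)
    have indI: "independent E I"
    proof -
      have "\<forall>y\<in>I'. \<not> E v y" using I'(1) by (auto simp: W'_def N_def)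
      moreover have "\<forall>y\<in>I'. \<not> E y v" using calculation sg by (auto simp: simple_graph_def)
      moreover have "\<not> E v v" using sg by (simp add: simple_graph_def)
      ultimately show ?thesis using I'(2) by (auto simp: I_def independent_def)
    qed
    have IW: "I \<subseteq> W" using I'(1) vW by (auto simp: I_def W'_def)
    have degN: "deg_in E W v = card N" by (simp add: deg_in_def N_def)
    have W'ge: "real (card W') \<ge> (1 - d) * (real (card W) - 1)"
      using cW'r degle degN by (simp add: algebra_simps)
    have "(real (card W) - 1) \<ge> (1 - 1/u) * real (card W)"
    proof -
      have "real (card W) / u \<ge> 1" using Wu u1 by simp
      thus ?thesis by (simp add: algebra_simps)
    qed
    hence "(1 - d) * (real (card W) - 1) \<ge> (1 - d) * ((1 - 1/u) * real (card W))"
      using d1 by (intro mult_left_mono) auto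
    moreover have "q * real (card W) = (1 - d) * ((1 - 1/u) * real (card W))" by (simp add: qdef)
    ultimately have qW: "q * real (card W) \<le> real (card W')" using W'ge by linarith
    have q0: "q \<ge> 0" using qdef d1 u1 by simp
    have "real (card W) * q ^ card I = (q * real (card W)) * q ^ card I'" using cI by simp
    also have "\<dots> \<le> real (card W') * q ^ card I'"
      using qW q0 by (intro mult_right_mono) auto
    finally show ?thesis using I'(3) IW indI by (intro exI[of _ I]) auto
  qed
qed

theorem lemma6:
  fixes V :: "'a set" and E :: "'a \<Rightarrow> 'a \<Rightarrow> bool" and d u :: real
  assumes "simple_graph V E"
    and "0 < d" and "d < 1" and "1 < u"
    and "\<And>S. S \<subseteq> V \<Longrightarrow> real (card S) \<ge> u \<Longrightarrow>
           real (min_degree E S) \<le> d * (real (card S) - 1)"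
    and "W \<subseteq> V" and "real (card W) \<ge> u"
  shows "real (indep_number E W) \<ge> - log ((1 - d) * (1 - 1 / u)) (real (card W) / u)"
proof -
  define q where "q = (1 - d) * (1 - 1 / u)"
  obtain I where I: "I \<subseteq> W" "independent E I" "real (card W) * q ^ card I < u"
    using greedy[OF assms(1-5) q_def assms(6)] by blast
  have finW: "finite W" using assms(1,6) finite_subset by (auto simp: simple_graph_def)
  have "card I \<le> indep_number E W" unfolding indep_number_def
  proof (rule Max_ge)
    have "{card I |I. I \<subseteq> W \<and> independent E I} \<subseteq> card ` Pow W" by auto
    thus "finite {card I |I. I \<subseteq> W \<and> independent E I}" using finW finite_subset by blast
  qed (use I in auto)
  have a1: "0 < 1 - 1/u" "1 - 1/u \<le> 1" using assms(4) by auto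
  have q0: "0 < q" "q < 1"
  proof -
    show "0 < q" using a1 assms(3) by (simp add: q_def)
    have "q \<le> (1 - d) * 1" unfolding q_def using a1 assms(3) by (intro mult_left_mono) auto
    thus "q < 1" using assms(2) by simp
  qed
  have Wpos: "real (card W) > 0" using assms(4,7) by simp
  have "ln (real (card W) * q ^ card I) < ln u"
    using I(3) Wpos q0 assms(4) by (intro ln_less_cancel_iff[THEN iffD2]) auto
  hence "ln (real (card W)) + real (card I) * ln q < ln u"
    using Wpos q0 by (simp add: ln_mult ln_realpow)
  hence "real (card I) * ln q < - ln (real (card W) / u)"
    using Wpos assms(4) by (simp add: ln_div)
  moreover have lq: "ln q < 0" using q0 by simp
  ultimately have "(- ln (real (card W) / u)) / ln q < real (card I)"
    using neg_divide_less_eq[OF lq] by blast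
  hence "- log q (real (card W) / u) < real (card I)"
    unfolding log_def by (simp only: minus_divide_left)
  thus ?thesis using \<open>card I \<le> indep_number E W\<close> q_def by simp
qed

end
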